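(* Fix $t\in(0,\infty)$. For $0\le\beta\le1$ let $\varphi_\beta$ be the function equal to $1$ on $B(0;\frac{1-\beta}2)$, equal to $\frac12$ on $B(0;\frac{1+\beta}2)\setminus B(0;\frac{1-\beta}2)$, and $0$ elsewhere, and let $\mu(\beta):=\xi(\varphi_\beta,t)$. Then $$\max_{0\le\beta\le1}\mu(\beta)=\max\{\mu(0),\mu(1)\}.$$
   Context: $\|\cdot\|$ is a norm on $\mathbb R^d$, $B(x;\rho)=\{y:\|x-y\|<\rho\}$ (with $B(0;0)=\emptyset$). $H(x)=x\ln x-x+1$. For nonnegative bounded measurable $\varphi$ with $0<\int\varphi<\infty$ and $0<t<\infty$, $s(\varphi,t)$ is the unique $s\ge0$ with $\int H(e^{s\varphi})=1/t$, and $\xi(\varphi,t):=\int\varphi e^{s(\varphi,t)\varphi}$. *)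

theory Defs
  imports "HOL-Analysis.Analysis"
begin

definition is_norm :: "('a::euclidean_space \<Rightarrow> real) \<Rightarrow> bool" where
  "is_norm N \<longleftrightarrow> (\<forall>x. N x = 0 \<longleftrightarrow> x = 0)
     \<and> (\<forall>c x. N (c *\<^sub>R x) = \<bar>c\<bar> * N x)
     \<and> (\<forall>x y. N (x + y) \<le> N x + N y)"

definition nball :: "('a::euclidean_space \<Rightarrow> real) \<Rightarrow> 'a \<Rightarrow> real \<Rightarrow> 'a set" where
  "nball N x \<rho> = {y. N (x - y) < \<rho>}"

definition Hfun :: "real \<Rightarrow> real" where
  "Hfun x = x * ln x - x + 1"

definition s_par :: "('a::euclidean_space \<Rightarrow> real) \<Rightarrow> real \<Rightarrow> real" where
  "s_par \<phi> t = (THE s. s \<ge> 0 \<and> (\<integral>x. Hfun (exp (s * \<phi> x)) \<partial>lborel) = 1 / t)"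

definition xi :: "('a::euclidean_space \<Rightarrow> real) \<Rightarrow> real \<Rightarrow> real" where
  "xi \<phi> t = (\<integral>x. \<phi> x * exp (s_par \<phi> t * \<phi> x) \<partial>lborel)"

definition phi_beta :: "('a::euclidean_space \<Rightarrow> real) \<Rightarrow> real \<Rightarrow> 'a \<Rightarrow> real" where
  "phi_beta N \<beta> x =
     (if x \<in> nball N 0 ((1 - \<beta>) / 2) then 1
      else if x \<in> nball N 0 ((1 + \<beta>) / 2) then 1 / 2 else 0)"

end

theory Submission
  imports Defs
begin


lemma normN_basic:
  assumes "is_norm N"
  shows "N 0 = 0" "N (-x) = N x" "N x \<ge> 0" "N (x + y) \<le> N x + N y" "N (c *\<^sub>R x) = \<bar>c\<bar> * N x"
    "N x = 0 \<longleftrightarrow> x = 0"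
proof -
  have h1: "\<And>x. N x = 0 \<longleftrightarrow> x = 0" and h2: "\<And>c x. N (c *\<^sub>R x) = \<bar>c\<bar> * N x"
    and h3: "\<And>x y. N (x + y) \<le> N x + N y" using assms unfolding is_norm_def by auto
  show "N 0 = 0" using h1 by simp
  show "N (-x) = N x" using h2[of "-1" x] by simp
  show "N x \<ge> 0" using h3[of x "-x"] h1[of 0] h2[of "-1" x] by simp
  show "N (x + y) \<le> N x + N y" by (rule h3)
  show "N (c *\<^sub>R x) = \<bar>c\<bar> * N x" by (rule h2)
  show "N x = 0 \<longleftrightarrow> x = 0" by (rule h1)
qed

lemma normN_sum:
  assumes "is_norm N" and "finite S"
  shows "N (\<Sum>i\<in>S. f i) \<le> (\<Sum>i\<in>S. N (f i))"
  using assms(2)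
proof (induction S rule: finite_induct)
  case empty then show ?case using normN_basic(1)[OF assms(1)] by simp
next
  case (insert x F)
  then show ?case using normN_basic(4)[OF assms(1), of "f x" "sum f F"] by simp
qed

lemma normN_upper:
  assumes "is_norm N"
  shows "N x \<le> (\<Sum>b\<in>Basis. N b) * norm x"
proof -
  have "N x = N (\<Sum>b\<in>Basis. (x \<bullet> b) *\<^sub>R b)" by (simp add: euclidean_representation)
  also have "\<dots> \<le> (\<Sum>b\<in>Basis. N ((x \<bullet> b) *\<^sub>R b))" by (rule normN_sum[OF assms]) simp
  also have "\<dots> = (\<Sum>b\<in>Basis. \<bar>x \<bullet> b\<bar> * N b)" using normN_basic(5)[OF assms] by simp
  also have "\<dots> \<le> (\<Sum>b\<in>Basis. norm x * N b)"
    by (intro sum_mono mult_right_mono) (auto simp: Basis_le_norm normN_basic(3)[OF assms])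
  also have "\<dots> = (\<Sum>b\<in>Basis. N b) * norm x" by (simp add: sum_distrib_left mult.commute)
  finally show ?thesis .
qed

lemma normN_lip:
  assumes "is_norm N"
  shows "\<bar>N x - N y\<bar> \<le> (\<Sum>b\<in>Basis. N b) * norm (x - y)"
proof -
  have "N x \<le> N (x - y) + N y" using normN_basic(4)[OF assms, of "x-y" y] by simp
  moreover have "N y \<le> N (y - x) + N x" using normN_basic(4)[OF assms, of "y-x" x] by simp
  moreover have "N (y - x) = N (x - y)" using normN_basic(2)[OF assms, of "x-y"] by simp
  ultimately show ?thesis using normN_upper[OF assms, of "x-y"] by linarith
qed

lemma normN_cont:
  assumes "is_norm N"
  shows "continuous_on UNIV N"
proof -
  define C where "C = (\<Sum>b\<in>Basis. N b) + 1"
  have Cpos: "C > 0" unfolding C_def using normN_basic(3)[OF assms] by (simp add: sum_nonneg add_nonneg_pos)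
  show ?thesis
  proof (rule continuous_on_iff[THEN iffD2], intro ballI allI impI)
    fix x :: 'a and e :: real assume "e > 0"
    show "\<exists>d>0. \<forall>x'\<in>UNIV. dist x' x < d \<longrightarrow> dist (N x') (N x) < e"
    proof (intro exI[of _ "e / C"] conjI ballI impI)
      show "e / C > 0" using \<open>e>0\<close> Cpos by simp
      fix x' assume "dist x' x < e / C"
      have "\<bar>N x' - N x\<bar> \<le> (\<Sum>b\<in>Basis. N b) * norm (x' - x)" by (rule normN_lip[OF assms])
      also have "\<dots> \<le> C * norm (x' - x)" unfolding C_def by (simp add: mult_right_mono)
      also have "\<dots> < C * (e / C)" using \<open>dist x' x < e / C\<close> Cpos by (simp add: dist_norm pos_less_divide_eq mult.commute)
      also have "\<dots> = e" using Cpos by simp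
      finally show "dist (N x') (N x) < e" by (simp add: dist_real_def)
    qed
  qed
qed

lemma normN_lower:
  assumes "is_norm N"
  shows "\<exists>c>0. \<forall>x. c * norm x \<le> N x"
proof -
  have ne: "sphere (0::'a) 1 \<noteq> {}"
  proof -
    obtain b :: 'a where "b \<in> Basis" using nonempty_Basis by blast
    then show ?thesis by (auto intro!: exI[of _ b])
  qed
  obtain x0 where x0: "x0 \<in> sphere 0 1" "\<forall>y\<in>sphere 0 1. N x0 \<le> N y"
    using continuous_attains_inf[OF compact_sphere ne continuous_on_subset[OF normN_cont[OF assms]]] by blast
  have "x0 \<noteq> 0" using x0 by auto
  then have pos: "N x0 > 0" using normN_basic(3,6)[OF assms, of x0] by linarith
  show ?thesis
  proof (intro exI[of _ "N x0"] conjI allI pos)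
    fix x :: 'a
    show "N x0 * norm x \<le> N x"
    proof (cases "x = 0")
      case True then show ?thesis by (simp add: normN_basic(1)[OF assms])
    next
      case False
      have "(1 / norm x) *\<^sub>R x \<in> sphere 0 1" using False by (simp add: norm_sgn)
      then have "N x0 \<le> N ((1 / norm x) *\<^sub>R x)" using x0 by blast
      also have "\<dots> = N x / norm x" using normN_basic(5)[OF assms] by simp
      finally show ?thesis using False by (simp add: field_simps)
    qed
  qed
qed



lemma nball0: "is_norm N \<Longrightarrow> nball N 0 r = {y. N y < r}"
  unfolding nball_def using normN_basic(2) by (metis diff_0)

lemma nball_open: "is_norm N \<Longrightarrow> open (nball N 0 r)"
  unfolding nball0 by (rule open_Collect_less[OF normN_cont continuous_on_const])

lemma nball_sets: "is_norm N \<Longrightarrow> nball N 0 r \<in> sets lborel"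
proof -
  assume a: "is_norm N"
  have "nball N 0 r \<in> sets borel" by (rule borel_open[OF nball_open[OF a]])
  then show ?thesis by simp
qed

lemma nball_bounded: "is_norm N \<Longrightarrow> bounded (nball N 0 r)"
proof -
  assume a: "is_norm N"
  obtain c where c: "c > 0" "\<And>x. c * norm x \<le> N x" using normN_lower[OF a] by blast
  have "nball N 0 r \<subseteq> cball 0 (r / c)"
  proof
    fix x assume "x \<in> nball N 0 r"
    then have "N x < r" using nball0[OF a] by auto
    then have "c * norm x \<le> r" using c(2)[of x] by simp
    then show "x \<in> cball 0 (r/c)" using c(1) by (simp add: pos_le_divide_eq mult.commute)
  qed
  then show ?thesis using bounded_cball bounded_subset by blast
qed

lemma nball_fin: "is_norm N \<Longrightarrow> emeasure lborel (nball N 0 r) < \<infinity>"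
  using nball_bounded emeasure_bounded_finite by blast

lemma nball_fmeas: "is_norm N \<Longrightarrow> nball N 0 r \<in> fmeasurable lborel"
  using nball_fin nball_sets by (metis fmeasurableI)

lemma nball_scale:
  fixes N :: "'a::euclidean_space \<Rightarrow> real"
  assumes a: "is_norm N" and r: "r > 0"
  shows "measure lborel (nball N 0 r) = r ^ DIM('a) * measure lborel (nball N 0 1)"
proof -
  define c where "c = 1 / r"
  have c0: "c \<noteq> 0" "c > 0" using r by (auto simp: c_def)
  have meas: "(\<lambda>x::'a. 0 + c *\<^sub>R x) \<in> measurable lborel borel" by simp
  have pre: "(\<lambda>x::'a. c *\<^sub>R x) -` nball N 0 1 = nball N 0 r"
    using c0 r by (auto simp: nball0[OF a] normN_basic(5)[OF a] c_def field_simps)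
  have "measure lborel (nball N 0 1) =
      measure (density (distr lborel borel (\<lambda>x::'a. 0 + c *\<^sub>R x)) (\<lambda>_. \<bar>c\<bar>^DIM('a))) (nball N 0 1)"
    using lborel_affine[OF c0(1), of "0::'a"] by simp
  also have "\<dots> = \<bar>c\<bar>^DIM('a) * measure (distr lborel borel (\<lambda>x::'a. 0 + c *\<^sub>R x)) (nball N 0 1)"
    using nball_sets[OF a] by (subst measure_density_const) auto
  also have "\<dots> = \<bar>c\<bar>^DIM('a) * measure lborel (nball N 0 r)"
    using nball_sets[OF a] by (subst measure_distr[OF meas]) (simp_all add: pre)
  finally show ?thesis using c0 r by (simp add: c_def power_divide field_simps)
qed

lemma nball_pos:
  fixes N :: "'a::euclidean_space \<Rightarrow> real"
  assumes a: "is_norm N"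
  shows "measure lborel (nball N 0 1) > 0"
proof -
  define C where "C = (\<Sum>b\<in>Basis. N b) + 1"
  have Cpos: "C > 0" unfolding C_def using normN_basic(3)[OF a] by (simp add: sum_nonneg add_nonneg_pos)
  have "ball (0::'a) (1/C) \<subseteq> nball N 0 1"
  proof
    fix x :: 'a assume "x \<in> ball 0 (1/C)"
    then have "norm x < 1 / C" by simp
    then have "C * norm x < 1" using Cpos by (simp add: pos_less_divide_eq mult.commute)
    moreover have "N x \<le> C * norm x" unfolding C_def distrib_right
      using normN_upper[OF a, of x] norm_ge_zero[of x] by linarith
    ultimately show "x \<in> nball N 0 1" using nball0[OF a] by auto
  qed
  then have "measure lborel (ball (0::'a) (1/C)) \<le> measure lborel (nball N 0 1)"
    by (rule measure_mono_fmeasurable[OF _ _ nball_fmeas[OF a]]) auto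
  moreover have "measure lborel (ball (0::'a) (1/C)) > 0" using content_ball_pos Cpos by simp
  ultimately show ?thesis by linarith
qed



definition hh :: "real \<Rightarrow> real" where "hh s = s * exp s - exp s + 1"

lemma Hfun_exp: "Hfun (exp s) = hh s"
  by (simp add: Hfun_def hh_def)

lemma hh0: "hh 0 = 0" by (simp add: hh_def)

lemma hh_cont: "continuous_on S hh"
  unfolding hh_def by (intro continuous_intros)

lemma hh_mono: assumes "0 \<le> x" "x < y" shows "hh x < hh y"
proof (rule DERIV_pos_imp_increasing_open[OF assms(2)])
  fix z assume "x < z" "z < y"
  then have "z > 0" using assms by simp
  show "\<exists>d. DERIV hh z :> d \<and> d > 0"
    by (rule exI[of _ "z * exp z"]) (auto simp: hh_def[abs_def] \<open>z>0\<close> intro!: derivative_eq_intros)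
qed (rule hh_cont)

lemma hh_nonneg: "0 \<le> s \<Longrightarrow> 0 \<le> hh s"
  using hh_mono[of 0 s] hh0 by (cases "s = 0") auto

lemma hh_le_mono: "0 \<le> x \<Longrightarrow> x \<le> y \<Longrightarrow> hh x \<le> hh y"
  using hh_mono[of x y] by (cases "x = y") auto

lemma hh_sq: assumes "1 \<le> s" shows "s^2 \<le> hh s"
proof -
  have "(s - 1) * (1 + s) \<le> (s - 1) * exp s"
    using assms exp_ge_add_one_self[of s] by (intro mult_left_mono) auto
  then show ?thesis by (simp add: hh_def power2_eq_square algebra_simps)
qed

definition GG :: "real \<Rightarrow> real \<Rightarrow> real \<Rightarrow> real" where
  "GG p q s = p * hh s + q * hh (s/2)"

lemma GG_strict: assumes "p \<ge> 0" "q \<ge> 0" "p + q > 0" "0 \<le> x" "x < y"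
  shows "GG p q x < GG p q y"
proof -
  have a: "hh x < hh y" using hh_mono assms by simp
  have b: "hh (x/2) < hh (y/2)" using hh_mono assms by simp
  show ?thesis
  proof (cases "p > 0")
    case True
    then have "p * hh x < p * hh y" using a by simp
    moreover have "q * hh (x/2) \<le> q * hh (y/2)" using b assms by (intro mult_left_mono) auto
    ultimately show ?thesis by (simp add: GG_def)
  next
    case False
    then have "q > 0" using assms by simp
    then have "q * hh (x/2) < q * hh (y/2)" using b by simp
    moreover have "p * hh x \<le> p * hh y" using a assms by (intro mult_left_mono) auto
    ultimately show ?thesis by (simp add: GG_def)
  qed
qed

lemma GG_ex1: assumes "p \<ge> 0" "q \<ge> 0" "p + q > 0" "c > 0"
  shows "\<exists>!s. s \<ge> 0 \<and> GG p q s = c"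
proof -
  define S where "S = 2 + 4 * c / (p + q)"
  have S2: "S \<ge> 2" using assms by (simp add: S_def)
  have "hh S \<ge> S^2" using hh_sq S2 by simp
  moreover have "hh (S/2) \<ge> (S/2)^2" using hh_sq S2 by simp
  moreover have "S^2 \<ge> (S/2)^2" using S2 by (simp add: power2_eq_square)
  ultimately have "GG p q S \<ge> (p + q) * (S/2)^2" unfolding GG_def using assms
    by (smt (verit, best) distrib_right mult_left_mono)
  moreover have "(S/2)^2 \<ge> S/2" using S2 by (simp add: power2_eq_square)
  moreover have "(p+q) * (S/2) \<ge> c"
  proof -
    have "(p+q) * (S/2) = (p+q) + 2 * c" using assms by (simp add: S_def field_simps)
    then show ?thesis using assms by simp
  qed
  ultimately have "GG p q S \<ge> c" using assms
    by (smt (verit, best) mult_left_mono)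
  moreover have "GG p q 0 \<le> c" using assms by (simp add: GG_def hh0)
  moreover have "continuous_on {0..S} (GG p q)" unfolding GG_def hh_def
    by (intro continuous_intros) auto
  ultimately obtain s where s: "0 \<le> s" "GG p q s = c" using IVT'[of "GG p q" 0 c S] S2 by auto
  show ?thesis
  proof (rule ex1I[of _ s])
    show "s \<ge> 0 \<and> GG p q s = c" using s by simp
    fix s' assume "s' \<ge> 0 \<and> GG p q s' = c"
    then show "s' = s" using GG_strict[OF assms(1-3), of s s'] GG_strict[OF assms(1-3), of s' s] s
      by (cases "s < s'"; cases "s' < s") auto
  qed
qed



lemma int_phi:
  fixes N :: "'a::euclidean_space \<Rightarrow> real"
  assumes a: "is_norm N" and b: "0 \<le> \<beta>" "\<beta> \<le> 1" and g0: "g 0 = 0"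
  shows "(\<integral>x. g (phi_beta N \<beta> x) \<partial>lborel) =
     g 1 * measure lborel (nball N 0 ((1 - \<beta>)/2))
     + g (1/2) * (measure lborel (nball N 0 ((1 + \<beta>)/2)) - measure lborel (nball N 0 ((1 - \<beta>)/2)))"
proof -
  define B1 where "B1 = nball N 0 ((1 - \<beta>)/2)"
  define B2 where "B2 = nball N 0 ((1 + \<beta>)/2)"
  have sub: "B1 \<subseteq> B2" using b by (auto simp: B1_def B2_def nball_def)
  have s1: "B1 \<in> sets lborel" "emeasure lborel B1 < \<infinity>" using nball_sets[OF a] nball_fin[OF a] by (auto simp: B1_def)
  have s2: "B2 \<in> sets lborel" "emeasure lborel B2 < \<infinity>" using nball_sets[OF a] nball_fin[OF a] by (auto simp: B2_def)
  have s3: "B2 - B1 \<in> sets lborel" "emeasure lborel (B2 - B1) < \<infinity>"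
    using s1 s2 by (auto intro: le_less_trans[OF emeasure_mono])
  have eq: "(\<lambda>x. g (phi_beta N \<beta> x)) = (\<lambda>x. g 1 * indicator B1 x + g (1/2) * indicator (B2 - B1) x)"
    using sub by (auto simp: fun_eq_iff phi_beta_def B1_def[symmetric] B2_def[symmetric] indicator_def g0)
  have "(\<integral>x. g (phi_beta N \<beta> x) \<partial>lborel) = g 1 * measure lborel B1 + g (1/2) * measure lborel (B2 - B1)"
  proof -
    have i1: "integrable lborel (indicat_real B1)" using s1 by (rule integrable_real_indicator)
    have i2: "integrable lborel (indicat_real (B2 - B1))" using s3 by (rule integrable_real_indicator)
    show ?thesis unfolding eq
      by (subst Bochner_Integration.integral_add[OF integrable_mult_right[OF i1] integrable_mult_right[OF i2]]) simp
  qed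
  also have "measure lborel (B2 - B1) = measure lborel B2 - measure lborel B1"
    using s1 s2 sub by (intro measure_Diff) auto
  finally show ?thesis by (simp add: B1_def B2_def)
qed

lemma mu_repr:
  fixes N :: "'a::euclidean_space \<Rightarrow> real"
  assumes a: "is_norm N" and b: "0 \<le> \<beta>" "\<beta> \<le> 1" and t: "t > 0"
  defines "P \<equiv> measure lborel (nball N 0 ((1 - \<beta>)/2))"
  defines "Q \<equiv> measure lborel (nball N 0 ((1 + \<beta>)/2)) - P"
  assumes pq: "P + Q > 0"
  shows "\<exists>s. s \<ge> 0 \<and> GG P Q s = 1/t \<and> xi (phi_beta N \<beta>) t = P * exp s + Q * (exp (s/2) / 2)"
proof -
  have P0: "P \<ge> 0" by (simp add: P_def)
  have "nball N 0 ((1 - \<beta>)/2) \<subseteq> nball N 0 ((1 + \<beta>)/2)" using b by (auto simp: nball_def)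
  then have Q0: "Q \<ge> 0" unfolding Q_def P_def
    using measure_mono_fmeasurable[OF _ nball_sets[OF a] nball_fmeas[OF a]] by simp
  have intH: "(\<integral>x. Hfun (exp (s * phi_beta N \<beta> x)) \<partial>lborel) = GG P Q s" for s
    using int_phi[OF a b, of "\<lambda>y. Hfun (exp (s * y))"]
    by (simp add: Hfun_exp Hfun_def[of 1] GG_def P_def Q_def mult.commute)
  have "\<exists>!s. s \<ge> 0 \<and> GG P Q s = 1/t" using GG_ex1[OF P0 Q0 pq] t by simp
  then have sp: "s_par (phi_beta N \<beta>) t \<ge> 0 \<and> GG P Q (s_par (phi_beta N \<beta>) t) = 1/t"
    unfolding s_par_def intH by (rule theI')
  define s where "s = s_par (phi_beta N \<beta>) t"
  have "xi (phi_beta N \<beta>) t = P * exp s + Q * (exp (s/2) / 2)"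
    unfolding xi_def s_def[symmetric]
    using int_phi[OF a b, of "\<lambda>y. y * exp (s * y)"] by (simp add: P_def Q_def)
  then show ?thesis using sp by (auto simp: s_def)
qed



lemma exp_tangent: "exp (a::real) * (1 + (b - a)) \<le> exp b"
proof -
  have "exp a * (1 + (b - a)) \<le> exp a * exp (b - a)"
    using exp_ge_add_one_self[of "b - a"] by (intro mult_left_mono) auto
  also have "\<dots> = exp b" by (simp add: exp_diff)
  finally show ?thesis .
qed

lemma key_ineq:
  assumes p: "p \<ge> 0" and q: "q \<ge> 0" and s0: "s0 > 0"
    and e: "GG p q s = c" and e0: "GG p0 q0 s0 = c"
  shows "p * exp s + q * (exp (s/2) / 2) \<le> (p0 * exp s0 + q0 * (exp (s0/2) / 2))
          + ((p - p0) * (exp s0 - 1) + (q - q0) * (exp (s0/2) - 1)) / s0"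
proof -
  have t1: "p * (exp s * (1 + (s0 - s))) \<le> p * exp s0" using exp_tangent p by (intro mult_left_mono) auto
  have t2: "q * (exp (s/2) * (1 + (s0/2 - s/2))) \<le> q * exp (s0/2)" using exp_tangent q by (intro mult_left_mono) auto
  have A: "s0 * (p * exp s + q * (exp (s/2) / 2)) \<le> c + p * (exp s0 - 1) + q * (exp (s0/2) - 1)"
    using t1 t2 e unfolding GG_def hh_def by (simp add: algebra_simps)
  have B: "c + p0 * (exp s0 - 1) + q0 * (exp (s0/2) - 1) = s0 * (p0 * exp s0 + q0 * (exp (s0/2) / 2))"
    using e0 unfolding GG_def hh_def by (simp add: algebra_simps)
  have "s0 * (p * exp s + q * (exp (s/2) / 2)) \<le>
     s0 * (p0 * exp s0 + q0 * (exp (s0/2) / 2)) + ((p - p0) * (exp s0 - 1) + (q - q0) * (exp (s0/2) - 1))"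
    using A B by (simp add: algebra_simps)
  then show ?thesis using s0 by (simp add: field_simps)
qed

lemma conv_pow: assumes "0 \<le> (w::real)" "w \<le> 1" shows "(2 - w)^n \<le> (1 - w) * 2^n + w"
proof (induction n)
  case 0 then show ?case by simp
next
  case (Suc n)
  have "(2 - w)^Suc n = (2 - w) * (2-w)^n" by simp
  also have "\<dots> \<le> (2 - w) * ((1 - w) * 2^n + w)" using Suc assms by (intro mult_left_mono) auto
  also have "\<dots> \<le> (1 - w) * 2^Suc n + w"
  proof -
    have "(1::real) \<le> 2^n" by simp
    then have "w * (1 - w) * (1 - 2^n) \<le> 0" using assms by (intro mult_nonneg_nonpos) auto
    then show ?thesis by (simp add: algebra_simps)
  qed
  finally show ?case .
qed

lemma piece1s: assumes "0 \<le> (w::real)" "w \<le> 1"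
  shows "((2 - w)^(Suc n) - 1) * w^n \<le> 1 - w^(Suc n)"
proof (induction n)
  case 0 then show ?case by simp
next
  case (Suc n)
  define A where "A = (2 - w)^(Suc n)"
  define B where "B = w^n"
  have IH: "(A - 1) * B \<le> 1 - w * B" using Suc by (simp add: A_def B_def)
  have m: "(2 - w) * w \<ge> 0" using assms by simp
  have t1: "((2 - w) * w) * ((A - 1) * B - (1 - w * B)) \<le> 0"
    using IH m by (simp add: mult_nonneg_nonpos)
  have "w * B \<le> 1" unfolding B_def using assms by (metis power_Suc power_le_one)
  then have t2: "(1 - w)^2 * (w * B - 1) \<le> 0" by (simp add: mult_nonneg_nonpos)
  have id: "((2 - w) * A - 1) * (w * B) - (1 - w * (w * B)) =
     ((2 - w) * w) * ((A - 1) * B - (1 - w * B)) + (1 - w)^2 * (w * B - 1)"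
    by (simp add: power2_eq_square algebra_simps)
  have "((2 - w) * A - 1) * (w * B) \<le> 1 - w * (w * B)" using id t1 t2 by linarith
  then show ?case by (simp add: A_def B_def)
qed

lemma piece1: assumes "0 \<le> (w::real)" "w \<le> 1" "d \<ge> 1"
  shows "((2 - w)^d - 1) * w^(d-1) \<le> 1 - w^d"
  using piece1s[OF assms(1,2), of "d - 1"] assms(3) by simp

lemma poly_ineq: assumes "0 \<le> (w::real)" "w \<le> 1" "d \<ge> 1"
  shows "((2-w)^d - 1)^2 * w^d \<le> (2^d - (2-w)^d) * (1-w^d)^2"
proof -
  have i: "((2 - w)^d - 1) * w^(d-1) \<le> 1 - w^d" by (rule piece1[OF assms])
  have ii: "((2 - w)^d - 1) * w \<le> (2^d - (2 - w)^d) * (1 - w)"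
    using conv_pow[OF assms(1,2), of d] by (simp add: algebra_simps)
  have "w^d \<le> w^1" using assms by (intro power_decreasing) auto
  then have iii: "1 - w \<le> 1 - w^d" by simp
  have "1 \<le> (2 - w)^d" using assms by (intro one_le_power) auto
  then have P1: "(2 - w)^d - 1 \<ge> 0" by simp
  have "(2 - w)^d \<le> 2^d" using assms by (intro power_mono) auto
  then have P2: "2^d - (2 - w)^d \<ge> 0" by simp
  have W0: "w^(d-1) \<ge> 0" "1 - w^d \<ge> 0" using assms by (auto simp: power_le_one)
  have "((2-w)^d - 1)^2 * w^d = (((2 - w)^d - 1) * w^(d-1)) * (((2 - w)^d - 1) * w)"
    using assms by (cases d) (auto simp: power2_eq_square algebra_simps)
  also have "\<dots> \<le> (1 - w^d) * ((2^d - (2 - w)^d) * (1 - w))"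
  proof (rule mult_mono[OF i ii])
    show "0 \<le> 1 - w^d" using W0 by simp
    show "0 \<le> ((2 - w)^d - 1) * w" using P1 assms by simp
  qed
  also have "\<dots> \<le> (1 - w^d) * ((2^d - (2 - w)^d) * (1 - w^d))"
    using iii P2 W0 by (intro mult_left_mono) auto
  finally show ?thesis by (simp add: power2_eq_square algebra_simps)
qed



lemma mball:
  fixes N :: "'a::euclidean_space \<Rightarrow> real"
  assumes a: "is_norm N" and r: "r \<ge> 0"
  shows "measure lborel (nball N 0 r) = r ^ DIM('a) * measure lborel (nball N 0 1)"
proof (cases "r = 0")
  case True
  have "nball N 0 r = {}"
  proof (rule equals0I)
    fix y assume "y \<in> nball N 0 r"
    then have "N y < 0" using True by (simp add: nball0[OF a])
    moreover have "N y \<ge> 0" by (rule normN_basic(3)[OF a])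
    ultimately show False by linarith
  qed
  moreover have "(0::real) ^ DIM('a) = 0" by (simp add: zero_power DIM_positive)
  ultimately show ?thesis using True by simp
next
  case False
  then have "r > 0" using r by linarith
  then show ?thesis by (rule nball_scale[OF a])
qed

lemma mu_explicit:
  fixes N :: "'a::euclidean_space \<Rightarrow> real"
  assumes a: "is_norm N" and b: "0 \<le> \<beta>" "\<beta> \<le> 1" and t: "t > 0"
  defines "V \<equiv> measure lborel (nball N 0 1)"
  shows "\<exists>s. s \<ge> 0 \<and> GG (V * ((1-\<beta>)/2)^DIM('a)) (V * ((1+\<beta>)/2)^DIM('a) - V * ((1-\<beta>)/2)^DIM('a)) s = 1/t
     \<and> xi (phi_beta N \<beta>) t = V * ((1-\<beta>)/2)^DIM('a) * exp s
         + (V * ((1+\<beta>)/2)^DIM('a) - V * ((1-\<beta>)/2)^DIM('a)) * (exp (s/2) / 2)"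
proof -
  have V: "V > 0" unfolding V_def by (rule nball_pos[OF a])
  have m1: "measure lborel (nball N 0 ((1-\<beta>)/2)) = V * ((1-\<beta>)/2)^DIM('a)"
    using mball[OF a, of "(1-\<beta>)/2"] b by (simp add: V_def mult.commute)
  have m2: "measure lborel (nball N 0 ((1+\<beta>)/2)) = V * ((1+\<beta>)/2)^DIM('a)"
    using mball[OF a, of "(1+\<beta>)/2"] b by (simp add: V_def mult.commute)
  have pos: "V * ((1+\<beta>)/2)^DIM('a) > 0" using V b by simp
  show ?thesis using mu_repr[OF a b t] pos by (simp add: m1 m2)
qed

lemma final_alg:
  fixes V D W PP x0 x1 :: real
  assumes "0 \<le> W" "W < 1" "W * (PP-1)^2 \<le> (D-PP) * (1-W)^2"
    "x0 \<ge> 1" "x1 \<ge> 1" "x1 \<le> x0^2"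
  shows "(x0 - 1) * (PP - 1 - (1-W)*x0) \<le> 0 \<or> (x1 - 1) * (W*x1 + PP - D) \<le> 0"
proof (cases "(1-W)*x0 \<ge> PP - 1")
  case True
  have h4: "x0 - 1 \<ge> 0" using assms(4) by linarith
  have "PP - 1 - (1-W)*x0 \<le> 0" using True by linarith
  with h4 have "(x0 - 1) * (PP - 1 - (1-W)*x0) \<le> 0" by (rule mult_nonneg_nonpos)
  then show ?thesis by simp
next
  case False
  have pos: "(1-W)*x0 \<ge> 0" using assms by simp
  then have "((1-W)*x0)^2 \<le> (PP-1)^2" using False by (intro power_mono) auto
  then have "W * ((1-W)*x0)^2 \<le> W * (PP-1)^2" using assms by (intro mult_left_mono) auto
  also have "\<dots> \<le> (D-PP) * (1-W)^2" by fact
  finally have "W * ((1-W)*x0)^2 \<le> (D-PP) * (1-W)^2" .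
  moreover have "W * ((1-W)*x0)^2 = (W * x0^2) * (1-W)^2" by (simp add: power_mult_distrib)
  ultimately have "(W * x0^2) * (1-W)^2 \<le> (D-PP) * (1-W)^2" by simp
  moreover have "(1-W)^2 > 0" using assms by simp
  ultimately have h1: "W * x0^2 \<le> D - PP" by (simp only: mult_le_cancel_right_pos)
  have h2: "W * x1 \<le> W * x0^2" using mult_left_mono[OF assms(6) assms(1)] .
  have h3: "W*x1 + PP - D \<le> 0" using h1 h2 by linarith
  have h4: "x1 - 1 \<ge> 0" using assms(5) by linarith
  have "(x1 - 1) * (W*x1 + PP - D) \<le> 0" using h4 h3 by (rule mult_nonneg_nonpos)
  then show ?thesis by simp
qed

lemma T1_alg: fixes k W PP x0 P Q :: real assumes "P = k * W" "Q = k * (PP - W)"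
  shows "(P - k) * (x0^2 - 1) + (Q - 0) * (x0 - 1) = k * ((x0 - 1) * (PP - 1 - (1-W)*x0))"
  unfolding assms by (simp add: power2_eq_square algebra_simps)

lemma T2_alg: fixes k W PP x1 P Q V D :: real assumes "P = k * W" "Q = k * (PP - W)" "V = k * D"
  shows "(P - 0) * (x1^2 - 1) + (Q - V) * (x1 - 1) = k * ((x1 - 1) * (W*x1 + PP - D))"
  unfolding assms by (simp add: power2_eq_square algebra_simps)

theorem lemma6p5:
  fixes N :: "'a::euclidean_space \<Rightarrow> real" and t :: real
    and \<mu> :: "real \<Rightarrow> real"
  assumes "is_norm N" and "0 < t"
    and "\<And>\<beta>. \<mu> \<beta> = xi (phi_beta N \<beta>) t"
  shows "(\<exists>\<beta>0\<in>{0..1}. \<forall>\<beta>\<in>{0..1}. \<mu> \<beta> \<le> \<mu> \<beta>0)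
       \<and> (SUP \<beta>\<in>{0..1}. \<mu> \<beta>) = max (\<mu> 0) (\<mu> 1)"
proof -
  note a = assms(1) and t = assms(2) and mu = assms(3)
  define d where "d = DIM('a)"
  define V where "V = measure lborel (nball N 0 1)"
  define D :: real where "D = 2^d"
  have V: "V > 0" unfolding V_def by (rule nball_pos[OF a])
  have d1: "d \<ge> 1" unfolding d_def by (simp add: DIM_positive Suc_le_eq)
  have D1: "D \<ge> 1" unfolding D_def by simp
  obtain s0 where s0: "s0 \<ge> 0" "GG (V / D) 0 s0 = 1/t" "\<mu> 0 = V / D * exp s0"
    using mu_explicit[OF a _ _ t, of 0] by (auto simp: mu V_def D_def d_def power_divide)
  obtain s1 where s1: "s1 \<ge> 0" "GG 0 V s1 = 1/t" "\<mu> 1 = V * (exp (s1/2) / 2)"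
  proof -
    have z: "(0::real)^DIM('a) = 0" by (simp add: zero_power DIM_positive)
    from mu_explicit[OF a _ _ t, of 1] obtain s where
      "s \<ge> 0" "GG 0 V s = 1/t" "\<mu> 1 = V * (exp (s/2) / 2)" by (auto simp: mu V_def z)
    then show ?thesis using that by blast
  qed
  have s0p: "s0 > 0" using s0 t by (cases "s0 = 0") (auto simp: GG_def hh0)
  have s1p: "s1 > 0" using s1 t by (cases "s1 = 0") (auto simp: GG_def hh0)
  have "hh (s1/2) * V = hh s0 * (V / D)" using s0(2) s1(2) by (simp add: GG_def mult.commute)
  then have "hh (s1/2) = hh s0 / D" using V D1 by (simp add: field_simps)
  also have "\<dots> \<le> hh s0" using hh_nonneg[OF s0(1)] D1 by (simp add: divide_le_eq mult_le_cancel_left1)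
  finally have "s1/2 \<le> s0" using hh_mono[of s0 "s1/2"] s0(1) by (cases "s0 < s1/2") auto
  define x0 where "x0 = exp (s0/2)"
  define x1 where "x1 = exp (s1/2)"
  have ex0: "exp s0 = x0^2" unfolding x0_def by (simp add: power2_eq_square exp_add[symmetric])
  have x0: "x0 \<ge> 1" unfolding x0_def using s0 by simp
  have x1: "x1 \<ge> 1" unfolding x1_def using s1 by simp
  have x10: "x1 \<le> x0^2" unfolding x1_def ex0[symmetric] using \<open>s1/2 \<le> s0\<close> by simp
  have main: "\<mu> \<beta> \<le> max (\<mu> 0) (\<mu> 1)" if b: "0 \<le> \<beta>" "\<beta> \<le> 1" for \<beta>
  proof (cases "\<beta> = 0")
    case True then show ?thesis by simp
  next
    case False
    define w where "w = 1 - \<beta>"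
    have w: "0 \<le> w" "w < 1" using b False by (auto simp: w_def)
    define W where "W = w^d"
    define PP where "PP = (2 - w)^d"
    have W: "0 \<le> W" "W < 1" using w d1 unfolding W_def by (auto simp: power_less_one_iff)
    have poly: "W * (PP-1)^2 \<le> (D-PP) * (1-W)^2"
      using poly_ineq[of w d] w d1 by (simp add: W_def PP_def D_def mult.commute)
    define P where "P = (V / D) * W"
    define Q where "Q = (V / D) * (PP - W)"
    have eP: "V * ((1-\<beta>)/2)^DIM('a) = P"
    proof -
      have e1: "(1-\<beta>)/2 = w/2" by (simp add: w_def)
      show ?thesis by (simp only: e1) (simp add: P_def W_def D_def d_def power_divide)
    qed
    have eQ: "V * ((1+\<beta>)/2)^DIM('a) - V * ((1-\<beta>)/2)^DIM('a) = Q"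
    proof -
      have e2: "(1+\<beta>)/2 = (2 - w)/2" by (simp add: w_def)
      have e1: "(1-\<beta>)/2 = w/2" by (simp add: w_def)
      show ?thesis by (simp only: e1 e2 power_divide) (simp add: P_def Q_def PP_def W_def D_def d_def right_diff_distrib)
    qed
    obtain s where s: "s \<ge> 0" "GG P Q s = 1/t" "\<mu> \<beta> = P * exp s + Q * (exp (s/2) / 2)"
      using mu_explicit[OF a b t, folded V_def, unfolded eQ, unfolded eP] by (auto simp: mu)
    have P0: "P \<ge> 0" using V W D1 by (simp add: P_def)
    have Q0: "Q \<ge> 0"
    proof -
      have "w^d \<le> (2-w)^d" using w by (intro power_mono) auto
      then show ?thesis using V D1 by (simp add: Q_def PP_def W_def)
    qed
    have k0: "\<mu> \<beta> \<le> \<mu> 0 + ((P - V/D) * (exp s0 - 1) + (Q - 0) * (exp (s0/2) - 1)) / s0"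
      using key_ineq[OF P0 Q0 s0p s(2) s0(2)] s(3) s0(3) by simp
    have k1: "\<mu> \<beta> \<le> \<mu> 1 + ((P - 0) * (exp s1 - 1) + (Q - V) * (exp (s1/2) - 1)) / s1"
      using key_ineq[OF P0 Q0 s1p s(2) s1(2)] s(3) s1(3) by simp
    have T1: "(P - V/D) * (exp s0 - 1) + (Q - 0) * (exp (s0/2) - 1)
        = (V/D) * ((x0 - 1) * (PP - 1 - (1-W)*x0))"
      unfolding ex0 x0_def[symmetric] by (rule T1_alg) (simp_all add: P_def Q_def)
    have ex1: "exp s1 = x1^2" unfolding x1_def by (simp add: power2_eq_square exp_add[symmetric])
    have T2: "(P - 0) * (exp s1 - 1) + (Q - V) * (exp (s1/2) - 1)
        = (V/D) * ((x1 - 1) * (W*x1 + PP - D))"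
      unfolding ex1 x1_def[symmetric] by (rule T2_alg) (use D1 in \<open>simp_all add: P_def Q_def\<close>)
    have VD: "V / D > 0" using V D1 by simp
    from final_alg[OF W poly x0 x1 x10] show ?thesis
    proof
      assume "(x0 - 1) * (PP - 1 - (1-W)*x0) \<le> 0"
      then have "(V/D) * ((x0 - 1) * (PP - 1 - (1-W)*x0)) \<le> 0"
        by (rule mult_nonneg_nonpos[OF less_imp_le[OF VD]])
      then have "(V/D) * ((x0 - 1) * (PP - 1 - (1-W)*x0)) / s0 \<le> 0"
        using s0p by (rule divide_nonpos_pos)
      then show ?thesis using k0 T1 by simp
    next
      assume "(x1 - 1) * (W*x1 + PP - D) \<le> 0"
      then have "(V/D) * ((x1 - 1) * (W*x1 + PP - D)) \<le> 0"
        by (rule mult_nonneg_nonpos[OF less_imp_le[OF VD]])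
      then have "(V/D) * ((x1 - 1) * (W*x1 + PP - D)) / s1 \<le> 0"
        using s1p by (rule divide_nonpos_pos)
      then show ?thesis using k1 T2 by simp
    qed
  qed
  have ex: "\<exists>\<beta>0\<in>{0..1}. \<forall>\<beta>\<in>{0..1}. \<mu> \<beta> \<le> \<mu> \<beta>0"
  proof (cases "\<mu> 1 \<le> \<mu> 0")
    case True then show ?thesis using main by (intro bexI[of _ 0]) (auto simp: max_def)
  next
    case False then show ?thesis using main by (intro bexI[of _ 1]) (auto simp: max_def)
  qed
  have "(SUP \<beta>\<in>{0..1}. \<mu> \<beta>) = max (\<mu> 0) (\<mu> 1)"
  proof (rule cSup_eq_maximum)
    show "max (\<mu> 0) (\<mu> 1) \<in> \<mu> ` {0..1}" by (auto simp: max_def)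
    show "\<And>x. x \<in> \<mu> ` {0..1} \<Longrightarrow> x \<le> max (\<mu> 0) (\<mu> 1)" using main by auto
  qed
  with ex show ?thesis by simp
qed

end
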